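(* Let $K$ be an imaginary quadratic field of class number $1$ with ring of integers $\mathcal{O}_K\subset\mathbb{C}$. Let $z_1,\dots,z_l\in\mathcal{O}_K$ with $\mathrm{Re}(z_j)\neq0$, and let $m_1,\dots,m_l,k$ be integers and $n\ge1$ an integer. If $$\frac{k\pi}{n}=\sum_{j=1}^{l}m_j\arctan\frac{\mathrm{Im}(z_j)}{\mathrm{Re}(z_j)},$$ then $\frac{k\pi}{n}=j\pi/4$ for some $j\in\mathbb{Z}$ if $K=\mathbb{Q}(\sqrt{-1})$, $\frac{k\pi}{n}=j\pi/6$ for some $j\in\mathbb{Z}$ if $K=\mathbb{Q}(\sqrt{-3})$, and $\frac{k\pi}{n}=j\pi/2$ for some $j\in\mathbb{Z}$ otherwise. *)

theory Defs
  imports "HOL-Analysis.Analysis" "HOL-Computational_Algebra.Computational_Algebra"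
begin

definition imag_quad_field :: "nat \<Rightarrow> complex set" where
  "imag_quad_field d =
     {of_real (of_rat a) + of_real (of_rat b) * (\<i> * of_real (sqrt (real d))) | a b. True}"

definition ring_of_integers :: "complex set \<Rightarrow> complex set" where
  "ring_of_integers K = {z \<in> K. algebraic_int z}"

definition is_ideal_of :: "complex set \<Rightarrow> complex set \<Rightarrow> bool" where
  "is_ideal_of R I \<longleftrightarrow> I \<subseteq> R \<and> 0 \<in> I \<and> (\<forall>x\<in>I. \<forall>y\<in>I. x + y \<in> I \<and> - x \<in> I)
     \<and> (\<forall>r\<in>R. \<forall>x\<in>I. r * x \<in> I)"

definition is_principal_ideal_of :: "complex set \<Rightarrow> complex set \<Rightarrow> bool" where
  "is_principal_ideal_of R I \<longleftrightarrow> (\<exists>a\<in>R. I = {a * r | r. r \<in> R})"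

definition class_number_one :: "complex set \<Rightarrow> bool" where
  "class_number_one K \<longleftrightarrow>
     (\<forall>I. is_ideal_of (ring_of_integers K) I \<longrightarrow> is_principal_ideal_of (ring_of_integers K) I)"

end

theory Submission
  imports Defs
begin


fun chebP :: "nat \<Rightarrow> complex poly" where
  "chebP 0 = [:2:]"
| "chebP (Suc 0) = [:0,1:]"
| "chebP (Suc (Suc k)) = [:0,1:] * chebP (Suc k) - chebP k"

lemma chebP_deg: "degree (chebP k) = k \<and> (k > 0 \<longrightarrow> lead_coeff (chebP k) = 1)"
proof (induction k rule: chebP.induct)
  case (3 k)
  have nz: "chebP (Suc k) \<noteq> 0" using 3 by (metis coeff_0 zero_neq_one zero_less_Suc)
  have d1: "degree ([:0,1:] * chebP (Suc k)) = Suc (Suc k)"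
    using 3 nz by (simp add: degree_mult_eq)
  have c1: "coeff ([:0,1:] * chebP (Suc k)) (Suc (Suc k)) = 1"
    using 3 by simp metis
  have "degree (chebP k) < Suc (Suc k)" using 3 by simp
  hence d2: "degree ([:0,1:] * chebP (Suc k) - chebP k) = Suc (Suc k)"
    using d1 by (metis degree_add_eq_left degree_minus diff_conv_add_uminus)
  have "coeff (chebP k) (Suc (Suc k)) = 0" using 3 by (simp add: coeff_eq_0)
  thus ?case using d2 c1 by simp
qed auto

lemma chebP_int: "\<forall>i. coeff (chebP k) i \<in> \<int>"
proof (induction k rule: chebP.induct)
  case 1 thus ?case by (simp add: coeff_pCons split: nat.split)
next
  case 2 thus ?case by (simp add: coeff_pCons split: nat.split)
next
  case (3 k)
  show ?case
  proof
    fix i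
    have "coeff ([:0,1:] * chebP (Suc k)) i \<in> \<int>"
      using 3 by (cases i) auto
    thus "coeff (chebP (Suc (Suc k))) i \<in> \<int>" using 3 by simp
  qed
qed

lemma chebP_poly:
  fixes z w :: complex
  assumes "z * w = 1"
  shows "poly (chebP k) (z + w) = z ^ k + w ^ k"
proof (induction k rule: chebP.induct)
  case (3 k)
  have "z ^ Suc (Suc k) + w ^ Suc (Suc k) = (z + w) * (z ^ Suc k + w ^ Suc k) - (z*w) * (z^k + w^k)"
    by (simp add: algebra_simps)
  thus ?case using 3 assms by simp
qed auto

lemma root_unity_trace_int:
  fixes z :: complex
  assumes "z ^ n = 1" "n \<ge> 1" "z * w = 1" "w ^ n = 1"
  shows "algebraic_int (z + w)"
proof (rule algebraic_int_root[of 2 "chebP n"])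
  show "poly (chebP n) (z + w) = 2" using chebP_poly[OF assms(3)] assms by simp
  show "\<forall>i. coeff (chebP n) i \<in> \<int>" by (rule chebP_int)
  show "lead_coeff (chebP n) = 1" "0 < degree (chebP n)" using chebP_deg[of n] assms by auto
qed auto



lemma rat_sq_int:
  fixes c :: real and N :: int
  assumes "c \<in> \<rat>" "c^2 = of_int N"
  shows "\<exists>p::int. N = p^2"
proof -
  from assms(1) obtain p q :: int where pq: "q > 0" "coprime p q" and c: "c = of_int p / of_int q"
    by (auto elim: Rats_cases')
  have "real_of_int (p^2) = of_int N * of_int (q^2)"
    using assms(2) pq(1) by (simp add: c power_divide field_simps)
  hence e: "p^2 = N * q^2" by (simp flip: of_int_mult of_int_power)
  have "q^2 dvd p^2" using e by simp
  moreover have "coprime (q^2) (p^2)" using pq(2) by (simp add: coprime_commute)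
  ultimately have "is_unit (q^2)" by (metis coprime_absorb_left)
  hence "q^2 = 1" using pq(1) by simp
  thus ?thesis using e by auto
qed

lemma sqf_d1:
  fixes d :: nat and b :: real
  assumes "squarefree d" "b \<in> \<rat>" "b^2 * d = 1"
  shows "d = 1"
proof -
  have "b \<noteq> 0" using assms by auto
  have "(1/b)^2 = of_int (int d)" using assms(3) \<open>b \<noteq> 0\<close> by (simp add: field_simps power2_eq_square)
  then obtain p where p: "int d = p^2" using rat_sq_int assms(2) by (metis Rats_divide Rats_1)
  have "d = (nat \<bar>p\<bar>)^2" using p by (metis nat_int nat_power_eq abs_ge_zero power2_abs)
  hence "is_unit (nat \<bar>p\<bar>)" using assms(1) unfolding squarefree_def by (simp add: power2_eq_square)
  thus ?thesis using \<open>d = _\<close> by simp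
qed

lemma sqf_d3:
  fixes d :: nat and b :: real
  assumes "squarefree d" "b \<in> \<rat>" "b^2 * d = 3/4"
  shows "d = 3"
proof -
  have "b \<noteq> 0" using assms by auto
  have "(3/(2*b))^2 = of_int (int (3*d))" using assms(3) \<open>b \<noteq> 0\<close>
    by (simp add: field_simps power2_eq_square)
  then obtain p where p: "int (3*d) = p^2" using rat_sq_int assms(2)
    by (meson Rats_divide Rats_mult Rats_number_of)
  define P where "P = nat \<bar>p\<bar>"
  have P: "3*d = P^2" using p unfolding P_def by (metis nat_int nat_power_eq abs_ge_zero power2_abs)
  have "(3::nat) dvd P^2" using P by (metis dvd_triv_left)
  moreover have "prime (3::nat)" by simp
  ultimately have "(3::nat) dvd P" using prime_dvd_power by blast
  then obtain r where r: "P = 3*r" by auto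
  have "d = 3 * r^2" using P r by (simp add: power2_eq_square)
  hence "r^2 dvd d" by simp
  hence "is_unit r" by (rule squarefreeD[OF assms(1)])
  thus ?thesis using \<open>d = 3 * r^2\<close> by simp
qed

lemma K_iff:
  "z \<in> imag_quad_field d \<longleftrightarrow> (\<exists>x y. x \<in> \<rat> \<and> y \<in> \<rat> \<and> z = Complex x (y * sqrt d))"
proof
  assume "z \<in> imag_quad_field d"
  then obtain a b where "z = of_real (of_rat a) + of_real (of_rat b) * (\<i> * of_real (sqrt (real d)))"
    unfolding imag_quad_field_def by auto
  hence "z = Complex (of_rat a) (of_rat b * sqrt d)" by (simp add: complex_eq_iff)
  thus "\<exists>x y. x \<in> \<rat> \<and> y \<in> \<rat> \<and> z = Complex x (y * sqrt d)"
    by (intro exI[of _ "of_rat a"] exI[of _ "of_rat b"]) simp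
next
  assume "\<exists>x y. x \<in> \<rat> \<and> y \<in> \<rat> \<and> z = Complex x (y * sqrt d)"
  then obtain x y where xy: "x \<in> \<rat>" "y \<in> \<rat>" "z = Complex x (y * sqrt d)" by blast
  from xy(1) obtain a where a: "x = of_rat a" by (auto elim: Rats_cases)
  from xy(2) obtain b where b: "y = of_rat b" by (auto elim: Rats_cases)
  have "z = of_real (of_rat a) + of_real (of_rat b) * (\<i> * of_real (sqrt (real d)))"
    using xy(3) a b by (simp add: complex_eq_iff)
  thus "z \<in> imag_quad_field d" unfolding imag_quad_field_def by auto
qed

lemma K_mult: "z \<in> imag_quad_field d \<Longrightarrow> w \<in> imag_quad_field d \<Longrightarrow> z * w \<in> imag_quad_field d"
proof -
  assume "z \<in> imag_quad_field d" "w \<in> imag_quad_field d"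
  then obtain x y x' y' where h: "x \<in> \<rat>" "y \<in> \<rat>" "z = Complex x (y * sqrt d)"
     "x' \<in> \<rat>" "y' \<in> \<rat>" "w = Complex x' (y' * sqrt d)" unfolding K_iff by blast
  have s: "sqrt (real d) * sqrt (real d) = real d" by simp
  have "z * w = Complex (x*x' - y*y'*real d) ((x*y' + y*x') * sqrt d)"
    using h s by (simp add: complex_eq_iff algebra_simps)
  moreover have "x*x' - y*y'*real d \<in> \<rat>" "x*y' + y*x' \<in> \<rat>" using h by auto
  ultimately show ?thesis unfolding K_iff
    by (intro exI[of _ "x*x' - y*y'*real d"] exI[of _ "x*y' + y*x'"]) simp
qed

lemma K_inverse: "z \<in> imag_quad_field d \<Longrightarrow> inverse z \<in> imag_quad_field d"
proof -
  assume "z \<in> imag_quad_field d"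
  then obtain x y where h: "x \<in> \<rat>" "y \<in> \<rat>" "z = Complex x (y * sqrt d)" unfolding K_iff by blast
  have s: "(sqrt (real d))^2 = real d" by simp
  define D where "D = x^2 + y^2 * real d"
  have "inverse z = Complex (x / D) ((- y / D) * sqrt d)"
    using h by (simp add: complex_eq_iff D_def power_mult_distrib)
  moreover have "x / D \<in> \<rat>" "- y / D \<in> \<rat>" using h by (auto simp: D_def)
  ultimately show ?thesis unfolding K_iff
    by (intro exI[of _ "x/D"] exI[of _ "-y/D"]) simp
qed

lemma K_cnj: "z \<in> imag_quad_field d \<Longrightarrow> cnj z \<in> imag_quad_field d"
proof -
  assume "z \<in> imag_quad_field d"
  then obtain x y where h: "x \<in> \<rat>" "y \<in> \<rat>" "z = Complex x (y * sqrt d)" unfolding K_iff by blast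
  have "cnj z = Complex x ((-y) * sqrt d)" using h by (simp add: complex_eq_iff)
  thus ?thesis unfolding K_iff using h by (intro exI[of _ x] exI[of _ "-y"]) simp
qed

lemma K_one: "1 \<in> imag_quad_field d"
  unfolding K_iff by (rule exI[of _ 1], rule exI[of _ 0]) (simp add: complex_eq_iff)

lemma K_power: "z \<in> imag_quad_field d \<Longrightarrow> z ^ n \<in> imag_quad_field d"
  by (induction n) (auto intro: K_mult K_one)

lemma K_powi: "z \<in> imag_quad_field d \<Longrightarrow> z powi m \<in> imag_quad_field d"
  by (auto simp: power_int_def intro: K_power K_inverse)

lemma K_prod: fixes l :: nat shows "(\<And>j. j < l \<Longrightarrow> f j \<in> imag_quad_field d) \<Longrightarrow> (\<Prod>j<l. f j) \<in> imag_quad_field d"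
  by (induction l) (auto intro: K_mult K_one)

lemma exp_arctan:
  fixes x y :: real
  assumes "x \<noteq> 0"
  shows "exp (complex_of_real (2 * arctan (y/x)) * \<i>) = Complex x y / cnj (Complex x y)"
proof -
  define t where "t = y / x"
  have q: "(sqrt (1 + t^2))^2 = 1 + t^2" by (simp add: add_pos_nonneg)
  have c: "cos (2 * arctan t) = (1 - t^2) / (1 + t^2)"
    using q by (simp add: cos_double cos_arctan sin_arctan power_divide diff_divide_distrib)
  have s: "sin (2 * arctan t) = 2 * t / (1 + t^2)"
    using q by (simp add: sin_double cos_arctan sin_arctan power2_eq_square)
  have pos: "x^2 + y^2 > 0" using assms by (simp add: add_pos_nonneg)
  have "exp (complex_of_real (2 * arctan t) * \<i>) = Complex (cos (2 * arctan t)) (sin (2 * arctan t))"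
    by (simp add: exp_eq_polar cis.ctr mult.commute)
  also have "\<dots> = Complex ((x^2 - y^2)/(x^2+y^2)) (2*x*y/(x^2+y^2))"
  proof -
    have "(1 - t^2)/(1+t^2) = (x^2 - y^2)/(x^2+y^2)"
      using assms pos by (simp add: t_def power_divide divide_simps)
    moreover have "2*t/(1+t^2) = 2*x*y/(x^2+y^2)"
      using assms pos by (simp add: t_def power_divide divide_simps) (simp add: algebra_simps power2_eq_square)
    ultimately show ?thesis unfolding c s by simp
  qed
  also have "\<dots> = Complex x y / cnj (Complex x y)"
    using pos by (simp add: complex_eq_iff Re_divide Im_divide field_simps power2_eq_square)
  finally show ?thesis by (simp add: t_def)
qed



lemma rootK:
  fixes \<zeta> :: complex
  assumes "d > 0" "squarefree d" "\<zeta> \<in> imag_quad_field d" "\<zeta> ^ n = 1" "n \<ge> 1"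
  shows "\<zeta>^2 = 1 \<or> (d = 1 \<and> \<zeta>^4 = 1) \<or> (d = 3 \<and> \<zeta>^6 = 1)"
proof -
  obtain x y where xy: "x \<in> \<rat>" "y \<in> \<rat>" "\<zeta> = Complex x (y * sqrt d)"
    using assms(3) unfolding K_iff by blast
  have "norm \<zeta> ^ n = 1" using assms(4) by (metis norm_one norm_power)
  hence n1: "norm \<zeta> = 1" using power_eq_imp_eq_base[of "norm \<zeta>" n 1] assms(5) by simp
  define w where "w = cnj \<zeta>"
  have zw: "\<zeta> * w = 1" unfolding w_def using n1 complex_norm_square[of \<zeta>] by simp
  have wn: "w ^ n = 1" unfolding w_def using assms(4) by (metis complex_cnj_one complex_cnj_power)
  have ai: "algebraic_int (\<zeta> + w)" by (rule root_unity_trace_int[OF assms(4) assms(5) zw wn])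
  have s: "\<zeta> + w = of_real (2 * x)" unfolding w_def using xy(3) by (simp add: complex_add_cnj)
  have "\<zeta> + w \<in> \<rat>" using s xy(1) by simp
  hence "\<zeta> + w \<in> \<int>" using ai rational_algebraic_int_is_int by blast
  then obtain t :: int where t: "\<zeta> + w = of_int t" by (elim Ints_cases)
  hence t2: "2 * x = of_int t" using s by (metis Re_complex_of_real of_real_of_int_eq)
  have nrm: "x^2 + y^2 * real d = 1"
    using n1 xy(3) by (simp add: cmod_def power_mult_distrib)
  have "x^2 \<le> 1" using nrm by (smt (verit) mult_nonneg_nonneg of_nat_0_le_iff zero_le_power2)
  hence "\<bar>x\<bar> \<le> 1" by (simp add: abs_square_le_1)
  hence "\<bar>t\<bar> \<le> 2" using t2 by linarith
  hence tc: "t = -2 \<or> t = -1 \<or> t = 0 \<or> t = 1 \<or> t = 2" by linarith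
  have q: "\<zeta>^2 = of_int t * \<zeta> - 1"
    using zw t[symmetric] by (simp add: power2_eq_square algebra_simps)
  have "\<zeta>^3 = \<zeta> * \<zeta>^2" by (simp add: power3_eq_cube power2_eq_square)
  also have "\<dots> = \<zeta> * (of_int t * \<zeta> - 1)" using q by simp
  also have "\<dots> = of_int t * \<zeta>^2 - \<zeta>" by (simp add: algebra_simps power2_eq_square)
  also have "\<dots> = of_int t * (of_int t * \<zeta> - 1) - \<zeta>" using q by simp
  finally have c3g: "\<zeta>^3 = of_int t * (of_int t * \<zeta> - 1) - \<zeta>" .
  show ?thesis
    using tc
  proof (elim disjE)
    assume "t = -2"
    hence "(\<zeta> + 1)^2 = \<zeta>^2 - (of_int t * \<zeta> - 1)" by (simp add: power2_eq_square algebra_simps)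
    hence "(\<zeta> + 1)^2 = 0" using q by simp
    hence "\<zeta> = -1" by (simp add: add_eq_0_iff) (metis minus_minus)
    thus ?thesis by simp
  next
    assume "t = 2"
    hence "(\<zeta> - 1)^2 = \<zeta>^2 - (of_int t * \<zeta> - 1)" by (simp add: power2_eq_square algebra_simps)
    hence "(\<zeta> - 1)^2 = 0" using q by simp
    hence "\<zeta> = 1" by simp
    thus ?thesis by simp
  next
    assume "t = 0"
    hence "x = 0" using t2 by simp
    hence "y^2 * real d = 1" using nrm by simp
    hence d1: "d = 1" using sqf_d1[OF assms(2) xy(2)] by simp
    have "\<zeta>^4 = (\<zeta>^2)^2" by (simp flip: power_mult)
    hence "\<zeta>^4 = 1" using q \<open>t = 0\<close> by simp
    thus ?thesis using d1 by simp
  next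
    assume "t = 1"
    hence xv: "x = 1/2" using t2 by simp
    have "y^2 * real d = 1 - x^2" using nrm by linarith
    hence "y^2 * real d = 3/4" using xv by (simp add: power2_eq_square)
    hence d3: "d = 3" using sqf_d3[OF assms(2) xy(2)] by simp
    have "\<zeta>^3 = -1" using c3g \<open>t = 1\<close> by simp
    hence c3: "\<zeta>^3 = -1" .
    have "\<zeta>^6 = (\<zeta>^3)^2" by (simp flip: power_mult)
    hence "\<zeta>^6 = 1" using c3 by simp
    thus ?thesis using d3 by simp
  next
    assume "t = -1"
    hence xv: "x = -1/2" using t2 by simp
    have "y^2 * real d = 1 - x^2" using nrm by linarith
    hence "y^2 * real d = 3/4" using xv by (simp add: power2_eq_square)
    hence d3: "d = 3" using sqf_d3[OF assms(2) xy(2)] by simp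
    have "\<zeta>^3 = 1" using c3g \<open>t = -1\<close> by simp
    hence c3: "\<zeta>^3 = 1" .
    have "\<zeta>^6 = (\<zeta>^3)^2" by (simp flip: power_mult)
    hence "\<zeta>^6 = 1" using c3 by simp
    thus ?thesis using d3 by simp
  qed
qed



lemma exp_root_angle:
  fixes \<theta> :: real and N :: nat
  assumes "exp (complex_of_real (2 * real N * \<theta>) * \<i>) = 1" "N > 0"
  shows "\<exists>j::int. \<theta> = j * pi / N"
proof -
  from assms(1) obtain j :: int where "2 * real N * \<theta> = of_int (2 * j) * pi"
    unfolding exp_eq_1 by auto
  hence "\<theta> = j * pi / N" using assms(2) by (simp add: field_simps)
  thus ?thesis by blast
qed

lemma main_part:
  fixes d :: nat and l :: nat and z :: "nat \<Rightarrow> complex" and m :: "nat \<Rightarrow> int"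
    and k :: int and n :: nat
  assumes "d > 0" and "squarefree d"
    and "\<forall>j<l. z j \<in> imag_quad_field d"
    and "\<forall>j<l. Re (z j) \<noteq> 0"
    and "n \<ge> 1"
    and "k * pi / n = (\<Sum>j<l. m j * arctan (Im (z j) / Re (z j)))"
  shows "(d = 1 \<longrightarrow> (\<exists>j::int. k * pi / n = j * pi / 4))
       \<and> (d = 3 \<longrightarrow> (\<exists>j::int. k * pi / n = j * pi / 6))
       \<and> (d \<noteq> 1 \<and> d \<noteq> 3 \<longrightarrow> (\<exists>j::int. k * pi / n = j * pi / 2))"
proof -
  define \<theta> where "\<theta> = k * pi / n"
  define a where "a j = arctan (Im (z j) / Re (z j))" for j
  define E where "E x = exp (complex_of_real x * \<i>)" for x
  have Emult: "E (of_int c * x) = E x powi c" for c x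
    unfolding E_def by (simp add: exp_power_int algebra_simps)
  have Enat: "E (real N * x) = E x ^ N" for N x
    unfolding E_def by (simp add: exp_of_nat_mult[symmetric] algebra_simps)
  have Esum: "E (\<Sum>j<l. f j) = (\<Prod>j<l. E (f j))" for f :: "nat \<Rightarrow> real"
    unfolding E_def by (simp add: sum_distrib_right exp_sum)
  define \<zeta> where "\<zeta> = (\<Prod>j<l. (z j / cnj (z j)) powi m j)"
  have aj: "E (2 * a j) = z j / cnj (z j)" if "j < l" for j
  proof -
    have "E (2 * a j) = Complex (Re (z j)) (Im (z j)) / cnj (Complex (Re (z j)) (Im (z j)))"
      unfolding E_def a_def using assms(4) that by (intro exp_arctan) auto
    thus ?thesis by simp
  qed
  have "E (2 * \<theta>) = E (\<Sum>j<l. of_int (m j) * (2 * a j))"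
    unfolding \<theta>_def assms(6) a_def by (simp add: sum_distrib_left algebra_simps)
  also have "\<dots> = \<zeta>"
    unfolding Esum \<zeta>_def Emult by (intro prod.cong) (auto simp: aj)
  finally have z\<theta>: "E (2 * \<theta>) = \<zeta>" .
  have zK: "\<zeta> \<in> imag_quad_field d"
    unfolding \<zeta>_def using assms(3)
    by (intro K_prod K_powi) (auto simp: divide_inverse intro!: K_mult K_inverse K_cnj)
  have "\<zeta> ^ n = E (real n * (2 * \<theta>))" using z\<theta> Enat by simp
  also have "real n * (2 * \<theta>) = 2 * k * pi" unfolding \<theta>_def using assms(5) by simp
  also have "E (2 * k * pi) = 1" unfolding E_def exp_eq_1 by (intro conjI exI[of _ k]) auto
  finally have zn: "\<zeta> ^ n = 1" .
  have pw: "\<zeta> ^ N = 1 \<Longrightarrow> N > 0 \<Longrightarrow> \<exists>j::int. \<theta> = j * pi / N" for N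
  proof -
    assume "\<zeta> ^ N = 1" "N > 0"
    hence "E (real N * (2 * \<theta>)) = 1" using z\<theta> Enat by simp
    hence "exp (complex_of_real (2 * real N * \<theta>) * \<i>) = 1" unfolding E_def by (simp add: algebra_simps)
    thus ?thesis using exp_root_angle \<open>N > 0\<close> by blast
  qed
  have r: "\<zeta>^2 = 1 \<or> (d = 1 \<and> \<zeta>^4 = 1) \<or> (d = 3 \<and> \<zeta>^6 = 1)"
    using rootK[OF assms(1) assms(2) zK zn assms(5)] .
  have s4: "\<zeta>^2 = 1 \<Longrightarrow> \<zeta>^4 = 1" by (metis power_mult numeral_times_numeral power_one semiring_norm(12) num_double)
  have s6: "\<zeta>^2 = 1 \<Longrightarrow> \<zeta>^6 = 1" proof -
    assume "\<zeta>^2 = 1" moreover have "\<zeta>^6 = (\<zeta>^2)^3" by (simp flip: power_mult)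
    ultimately show ?thesis by simp qed
  have "(d = 1 \<longrightarrow> (\<exists>j::int. \<theta> = j * pi / 4))
       \<and> (d = 3 \<longrightarrow> (\<exists>j::int. \<theta> = j * pi / 6))
       \<and> (d \<noteq> 1 \<and> d \<noteq> 3 \<longrightarrow> (\<exists>j::int. \<theta> = j * pi / 2))"
    using r s4 s6 pw[of 2] pw[of 4] pw[of 6] by auto
  thus ?thesis unfolding \<theta>_def .
qed


theorem corollary4p3:
  fixes d :: nat and l :: nat and z :: "nat \<Rightarrow> complex" and m :: "nat \<Rightarrow> int"
    and k :: int and n :: nat
  assumes "d > 0" and "squarefree d"
    and "class_number_one (imag_quad_field d)"
    and "\<forall>j<l. z j \<in> ring_of_integers (imag_quad_field d)"
    and "\<forall>j<l. Re (z j) \<noteq> 0"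
    and "n \<ge> 1"
    and "k * pi / n = (\<Sum>j<l. m j * arctan (Im (z j) / Re (z j)))"
  shows "(d = 1 \<longrightarrow> (\<exists>j::int. k * pi / n = j * pi / 4))
       \<and> (d = 3 \<longrightarrow> (\<exists>j::int. k * pi / n = j * pi / 6))
       \<and> (d \<noteq> 1 \<and> d \<noteq> 3 \<longrightarrow> (\<exists>j::int. k * pi / n = j * pi / 2))"
proof -
  have "\<forall>j<l. z j \<in> imag_quad_field d"
    using assms(4) unfolding ring_of_integers_def by auto
  thus ?thesis using main_part[OF assms(1) assms(2) _ assms(5) assms(6) assms(7)] by blast
qed

end
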